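(* Let $H$ be a balanced graph and let $d \in \mathbb{N}$. If $F \subsetneq H_d$ is a proper subgraph of $H_d$ whose vertex set contains both endpoints of the root of $H_d$, then $e(F) \leqslant \big(v(F) - 2\big)\lambda(H)$.
   Context: $H$ is a graph with $v(H) \geqslant 4$; it is balanced if $e(H) \geqslant 2v(H)-2$ and $\frac{e(F)-1}{v(F)-2} \leqslant \lambda(H) := \frac{e(H)-2}{v(H)-2}$ for every proper subgraph $F \subsetneq H$ with $v(F) \geqslant 3$. The graph $H_d$: choose a sequence of edges $(e_1, e_2, \ldots)$ of $H$ such that $e_j$ and $e_{j+1}$ share no endpoint for every $j$. Take copies $H^{(1)}, \ldots, H^{(d)}$ of $H$ and, for each $1 \leqslant j \leqslant d-1$, identify the endpoints of $e_{j+1}$ in $H^{(j)}$ with the endpoints of $e_{j+1}$ in $H^{(j+1)}$. Then remove $e_1$ from $H^{(1)}$ and, for each $1 \leqslant j \leqslant d-1$, remove the shared edge $e_{j+1}$ of $H^{(j)} \cap H^{(j+1)}$. The root of $H_d$ is the pair of endpoints of $e_1$ in $H^{(1)}$. (Any such choice of edge sequence is allowed.) *)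

theory Defs
  imports Complex_Main
begin

type_synonym 'a graph = "'a set \<times> 'a set set"

definition is_graph :: "'a graph \<Rightarrow> bool" where
  "is_graph G \<longleftrightarrow> finite (fst G) \<and> (\<forall>f\<in>snd G. f \<subseteq> fst G \<and> card f = 2)"

definition nv :: "'a graph \<Rightarrow> nat" where "nv G = card (fst G)"
definition ne :: "'a graph \<Rightarrow> nat" where "ne G = card (snd G)"

definition subgraph :: "'a graph \<Rightarrow> 'a graph \<Rightarrow> bool" where
  "subgraph F G \<longleftrightarrow> fst F \<subseteq> fst G \<and> snd F \<subseteq> snd G \<and> (\<forall>f\<in>snd F. f \<subseteq> fst F)"

definition lam :: "'a graph \<Rightarrow> real" where
  "lam H = (real (ne H) - 2) / (real (nv H) - 2)"

definition balanced :: "'a graph \<Rightarrow> bool" where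
  "balanced H \<longleftrightarrow> is_graph H \<and> nv H \<ge> 4 \<and> real (ne H) \<ge> 2 * real (nv H) - 2 \<and>
     (\<forall>F. subgraph F H \<and> F \<noteq> H \<and> nv F \<ge> 3 \<longrightarrow>
          (real (ne F) - 1) / (real (nv F) - 2) \<le> lam H)"

definition edge_seq :: "'a graph \<Rightarrow> (nat \<Rightarrow> 'a set) \<Rightarrow> bool" where
  "edge_seq H es \<longleftrightarrow> (\<forall>j\<ge>1. es j \<in> snd H) \<and> (\<forall>j\<ge>1. es j \<inter> es (Suc j) = {})"

(* vertex x of copy j (1 <= j <= d); the endpoints of e_j in copy j (j >= 2)
   are identified with the same endpoints in copy j-1 *)
definition glue :: "(nat \<Rightarrow> 'a set) \<Rightarrow> nat \<Rightarrow> 'a \<Rightarrow> nat \<times> 'a" where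
  "glue es j x = (if 2 \<le> j \<and> x \<in> es j then (j - 1, x) else (j, x))"

definition Hd :: "'a graph \<Rightarrow> (nat \<Rightarrow> 'a set) \<Rightarrow> nat \<Rightarrow> (nat \<times> 'a) graph" where
  "Hd H es d =
     ({glue es j x | j x. j \<in> {1..d} \<and> x \<in> fst H},
      {glue es j ` f | j f. j \<in> {1..d} \<and> f \<in> snd H \<and> \<not> (j = 1 \<and> f = es 1)
          \<and> \<not> (2 \<le> j \<and> f = es j) \<and> \<not> (j < d \<and> f = es (Suc j))})"

definition root :: "(nat \<Rightarrow> 'a set) \<Rightarrow> (nat \<times> 'a) set" where
  "root es = Pair 1 ` es 1"

end

theory Submission
  imports Defs
begin


lemma edge_seq_facts:
  assumes "is_graph H" "edge_seq H es" "j \<ge> 1"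
  shows "es j \<in> snd H" "es j \<subseteq> fst H" "card (es j) = 2" "finite (es j)"
    "es j \<inter> es (Suc j) = {}"
  using assms unfolding is_graph_def edge_seq_def
  by (auto intro: card_ge_0_finite)

lemma lam_ge2:
  assumes "balanced H" shows "lam H \<ge> 2"
proof -
  have a: "real (nv H) \<ge> 4" "real (ne H) \<ge> 2 * real (nv H) - 2"
    using assms unfolding balanced_def by auto
  hence "2 * (real (nv H) - 2) \<le> real (ne H) - 2" by (simp add: algebra_simps)
  thus ?thesis unfolding lam_def using a by (simp add: le_divide_eq)
qed

lemma small_edges:
  assumes "finite V" "\<forall>f\<in>E. f \<subseteq> V \<and> card f = 2" "card V \<le> 2"
  shows "E \<subseteq> {V}"
proof
  fix f assume "f \<in> E"
  hence "f \<subseteq> V" "card f = 2" using assms by auto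
  hence "f = V" using assms card_subset_eq by (metis antisym card_mono)
  thus "f \<in> {V}" by simp
qed

lemma bal_apply:
  assumes "balanced H" "subgraph Q H" "Q \<noteq> H" "nv Q \<ge> 3"
  shows "real (ne Q) - 1 \<le> (real (nv Q) - 2) * lam H"
proof -
  have "(real (ne Q) - 1) / (real (nv Q) - 2) \<le> lam H"
    using assms unfolding balanced_def by blast
  moreover have "real (nv Q) - 2 > 0" using assms by simp
  ultimately show ?thesis by (simp add: divide_le_eq mult.commute)
qed

lemma copy_bound:
  assumes bal: "balanced H" and e: "e \<in> snd H" and VP: "VP \<subseteq> fst H"
    and EP: "EP \<subseteq> snd H - {e}" and sub: "\<forall>f\<in>EP. f \<subseteq> VP"
  shows "(real (card VP) - real (card (VP \<inter> e))) * lam H - real (card EP) \<ge> -1"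
    and "\<not> (VP = fst H \<and> EP = snd H - {e}) \<Longrightarrow>
         (real (card VP) - real (card (VP \<inter> e))) * lam H - real (card EP) \<ge> 0"
proof -
  have g: "is_graph H" using bal unfolding balanced_def by auto
  have finH: "finite (fst H)" using g unfolding is_graph_def by auto
  have finE: "finite (snd H)" using g finH unfolding is_graph_def
    by (meson Pow_iff finite_Pow_iff rev_finite_subset subsetI)
  have ecard: "card e = 2" and esub: "e \<subseteq> fst H" using g e unfolding is_graph_def by auto
  have finVP: "finite VP" using VP finH finite_subset by blast
  have finEP: "finite EP" using EP finE finite_subset by blast
  have lam: "lam H \<ge> 2" using lam_ge2[OF bal] .
  have EPc: "\<forall>f\<in>EP. f \<subseteq> VP \<and> card f = 2" using sub EP g unfolding is_graph_def by auto
  have subP: "subgraph (VP, EP) H" using VP EP sub unfolding subgraph_def by auto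
  have main: "(real (card VP) - real (card (VP \<inter> e))) * lam H - real (card EP) \<ge> 0"
    if nf: "\<not> (VP = fst H \<and> EP = snd H - {e})"
  proof (cases "e \<subseteq> VP")
    case True
    hence s: "card (VP \<inter> e) = 2" using ecard by (simp add: Int_absorb1)
    have eEP: "e \<notin> EP" using EP by auto
    have subQ: "subgraph (VP, insert e EP) H" using VP EP sub True e unfolding subgraph_def by auto
    have neQ: "(VP, insert e EP) \<noteq> H"
    proof
      assume "(VP, insert e EP) = H"
      hence "VP = fst H" "insert e EP = snd H" by auto
      hence "EP = snd H - {e}" using eEP by auto
      thus False using nf \<open>VP = fst H\<close> by simp
    qed
    show ?thesis
    proof (cases "card VP \<ge> 3")
      case True
      have "real (ne (VP, insert e EP)) - 1 \<le> (real (nv (VP, insert e EP)) - 2) * lam H"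
        using bal_apply[OF bal subQ neQ] True by (simp add: nv_def)
      thus ?thesis using s eEP finEP by (simp add: ne_def nv_def)
    next
      case False
      have "card e \<le> card VP" using True finVP card_mono by blast
      hence "card VP = 2" using False ecard by simp
      hence "EP \<subseteq> {VP}" using small_edges[OF finVP EPc] by simp
      moreover have "VP = e" using True \<open>card VP = 2\<close> ecard finVP
        by (metis card_subset_eq)
      ultimately have "EP = {}" using eEP by auto
      thus ?thesis using s \<open>card VP = 2\<close> by simp
    qed
  next
    case False
    have "card (VP \<inter> e) < 2"
    proof -
      have "VP \<inter> e \<subset> e" using False by auto
      thus ?thesis using ecard by (metis card_ge_0_finite psubset_card_mono zero_less_numeral)
    qed
    hence s1: "real (card (VP \<inter> e)) \<le> 1" by simp
    show ?thesis
    proof (cases "card VP = 0")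
      case True
      hence "VP = {}" using finVP by simp
      hence "EP = {}" using EPc by fastforce
      thus ?thesis using \<open>VP = {}\<close> by simp
    next
      case c0: False
      have "real (card EP) \<le> (real (card VP) - 1) * lam H"
      proof (cases "card VP \<ge> 3")
        case True
        have neP: "(VP, EP) \<noteq> H" using False esub by auto
        have "real (ne (VP, EP)) - 1 \<le> (real (nv (VP, EP)) - 2) * lam H"
          using bal_apply[OF bal subP neP] True by (simp add: nv_def)
        hence "real (card EP) \<le> (real (card VP) - 2) * lam H + 1" by (simp add: ne_def nv_def)
        also have "\<dots> \<le> (real (card VP) - 1) * lam H" using lam by (simp add: algebra_simps)
        finally show ?thesis .
      next
        case False
        hence "EP \<subseteq> {VP}" using small_edges[OF finVP EPc] by simp
        hence "card EP \<le> 1" using card_mono[of "{VP}" EP] by simp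
        show ?thesis
        proof (cases "card VP = 1")
          case True
          have "EP = {}"
          proof (rule ccontr)
            assume "EP \<noteq> {}"
            then obtain f where "f \<in> EP" by auto
            hence "f \<subseteq> VP" "card f = 2" using EPc by auto
            hence "2 \<le> card VP" using card_mono[OF finVP] by metis
            thus False using True by simp
          qed
          thus ?thesis using True by simp
        next
          case False
          hence "card VP = 2" using c0 \<open>\<not> card VP \<ge> 3\<close> by simp
          thus ?thesis using \<open>card EP \<le> 1\<close> lam by simp
        qed
      qed
      moreover have "(real (card VP) - 1) * lam H \<le> (real (card VP) - real (card (VP \<inter> e))) * lam H"
        using s1 lam by (intro mult_right_mono) auto
      ultimately show ?thesis by linarith
    qed
  qed
  show "\<not> (VP = fst H \<and> EP = snd H - {e}) \<Longrightarrow>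
         (real (card VP) - real (card (VP \<inter> e))) * lam H - real (card EP) \<ge> 0" using main by blast
  show "(real (card VP) - real (card (VP \<inter> e))) * lam H - real (card EP) \<ge> -1"
  proof (cases "VP = fst H \<and> EP = snd H - {e}")
    case True
    have "card EP = ne H - 1" using True e finE unfolding ne_def by simp
    moreover have "card (VP \<inter> e) = 2" using True esub ecard by (simp add: Int_absorb1)
    moreover have "(real (nv H) - 2) * lam H = real (ne H) - 2"
      using bal unfolding lam_def balanced_def by simp
    moreover have "ne H \<ge> 1" using e finE unfolding ne_def by (metis card_0_eq empty_iff less_one not_le)
    ultimately show ?thesis using True by (simp add: nv_def of_nat_diff)
  next
    case False thus ?thesis using main by force
  qed
qed




lemma glue_inj: "inj (glue es j)"
  unfolding inj_def glue_def by (auto split: if_splits)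

lemma glue_fst: "fst (glue es j x) \<le> j"
  unfolding glue_def by auto

lemma glue_fst2: "fst (glue es j x) = j \<or> (x \<in> es j \<and> glue es j x = (j - 1, x) \<and> 2 \<le> j)"
  unfolding glue_def by auto

lemma glue_snd[simp]: "snd (glue es j x) = x"
  unfolding glue_def by auto

lemma Hd_V: "p \<in> fst (Hd H es n) \<longleftrightarrow> (\<exists>j x. p = glue es j x \<and> 1 \<le> j \<and> j \<le> n \<and> x \<in> fst H)"
  unfolding Hd_def by auto

lemma Hd_E: "f \<in> snd (Hd H es n) \<longleftrightarrow> (\<exists>j g. f = glue es j ` g \<and> 1 \<le> j \<and> j \<le> n \<and> g \<in> snd H
   \<and> \<not> (j = 1 \<and> g = es 1) \<and> \<not> (2 \<le> j \<and> g = es j) \<and> \<not> (j < n \<and> g = es (Suc j)))"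
  unfolding Hd_def by auto

lemma Hd_V_fst: "p \<in> fst (Hd H es d) \<Longrightarrow> fst p \<le> d"
  unfolding Hd_V by (metis glue_fst order_trans)

lemma Hd_V_Suc: "fst (Hd H es (Suc d)) = fst (Hd H es d) \<union> glue es (Suc d) ` fst H"
proof (rule set_eqI)
  fix p
  show "p \<in> fst (Hd H es (Suc d)) \<longleftrightarrow> p \<in> fst (Hd H es d) \<union> glue es (Suc d) ` fst H"
    unfolding Hd_V Un_iff image_iff
    using le_Suc_eq by auto
qed

lemma Hd_V_finite: assumes "finite (fst H)" shows "finite (fst (Hd H es d))"
proof -
  have "fst (Hd H es d) \<subseteq> (\<lambda>p. glue es (fst p) (snd p)) ` ({1..d} \<times> fst H)"
  proof
    fix p assume "p \<in> fst (Hd H es d)"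
    then obtain j x where "p = glue es j x" "1 \<le> j" "j \<le> d" "x \<in> fst H" unfolding Hd_V by blast
    thus "p \<in> (\<lambda>p. glue es (fst p) (snd p)) ` ({1..d} \<times> fst H)"
      by (intro image_eqI[of _ _ "(j, x)"]) auto
  qed
  thus ?thesis using assms by (meson finite_SigmaI finite_atLeastAtMost finite_imageI finite_subset)
qed

lemma Hd_E_sub: assumes "is_graph H" shows "\<forall>f\<in>snd (Hd H es d). f \<subseteq> fst (Hd H es d)"
proof (intro ballI subsetI)
  fix f p assume "f \<in> snd (Hd H es d)" "p \<in> f"
  then obtain j g x where "f = glue es j ` g" "1 \<le> j" "j \<le> d" "g \<in> snd H" "x \<in> g" "p = glue es j x"
    unfolding Hd_E by blast
  moreover have "g \<subseteq> fst H" using assms \<open>g \<in> snd H\<close> unfolding is_graph_def by auto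
  ultimately show "p \<in> fst (Hd H es d)" unfolding Hd_V by blast
qed

lemma glue_es_Suc:
  assumes "x \<in> es (Suc d)" "d \<ge> 1" shows "glue es (Suc d) x = (d, x)"
  using assms unfolding glue_def by auto

lemma glue_es_cur:
  assumes "is_graph H" "edge_seq H es" "x \<in> es (Suc d)" "d \<ge> 1" shows "glue es d x = (d, x)"
proof -
  have "x \<notin> es d" using edge_seq_facts(5)[OF assms(1,2,4)] assms(3) by auto
  thus ?thesis unfolding glue_def by auto
qed

lemma shared_V:
  assumes g: "is_graph H" and es: "edge_seq H es" and d: "d \<ge> 1"
  shows "fst (Hd H es d) \<inter> glue es (Suc d) ` fst H = Pair d ` es (Suc d)"
proof
  show "fst (Hd H es d) \<inter> glue es (Suc d) ` fst H \<subseteq> Pair d ` es (Suc d)"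
  proof
    fix p assume p: "p \<in> fst (Hd H es d) \<inter> glue es (Suc d) ` fst H"
    then obtain x where x: "p = glue es (Suc d) x" by auto
    have "fst p \<le> d" using p Hd_V_fst by blast
    hence "x \<in> es (Suc d) \<and> p = (d, x)" using glue_fst2[of es "Suc d" x] x by auto
    thus "p \<in> Pair d ` es (Suc d)" by auto
  qed
next
  show "Pair d ` es (Suc d) \<subseteq> fst (Hd H es d) \<inter> glue es (Suc d) ` fst H"
  proof
    fix p assume "p \<in> Pair d ` es (Suc d)"
    then obtain x where x: "x \<in> es (Suc d)" "p = (d, x)" by auto
    have xH: "x \<in> fst H" using edge_seq_facts(2)[OF g es, of "Suc d"] x by auto
    have "p = glue es d x" using glue_es_cur[OF g es x(1) d] x by simp
    hence "p \<in> fst (Hd H es d)" unfolding Hd_def using d xH by auto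
    moreover have "p = glue es (Suc d) x" using glue_es_Suc[of x es d, OF x(1) d] x by simp
    ultimately show "p \<in> fst (Hd H es d) \<inter> glue es (Suc d) ` fst H" using xH by auto
  qed
qed

definition CE :: "'a graph \<Rightarrow> (nat \<Rightarrow> 'a set) \<Rightarrow> nat \<Rightarrow> (nat \<times> 'a) set set" where
  "CE H es k = {glue es k ` f | f. f \<in> snd H \<and> f \<noteq> es k}"

lemma eprime_eq:
  assumes g: "is_graph H" and es: "edge_seq H es" and d: "d \<ge> 1"
  shows "glue es d ` es (Suc d) = Pair d ` es (Suc d)"
    and "glue es (Suc d) ` es (Suc d) = Pair d ` es (Suc d)"
proof -
  show "glue es d ` es (Suc d) = Pair d ` es (Suc d)"
    using glue_es_cur[OF g es _ d] by (intro image_cong) auto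
  show "glue es (Suc d) ` es (Suc d) = Pair d ` es (Suc d)"
    using glue_es_Suc[of _ es d, OF _ d] by (intro image_cong) auto
qed

lemma eprime_in:
  assumes g: "is_graph H" and es: "edge_seq H es" and d: "d \<ge> 1"
  shows "Pair d ` es (Suc d) \<in> snd (Hd H es d)"
proof -
  have f: "es (Suc d) \<in> snd H" using edge_seq_facts[OF g es, of "Suc d"] by auto
  have c: "card (es (Suc d)) = 2" using edge_seq_facts[OF g es, of "Suc d"] by auto
  have ne: "es (Suc d) \<noteq> es d" using edge_seq_facts(5)[OF g es d] c by auto
  have ne1: "d = 1 \<Longrightarrow> es (Suc d) \<noteq> es 1" using ne by simp
  have "\<exists>j f. glue es d ` es (Suc d) = glue es j ` f \<and> j \<in> {1..d} \<and> f \<in> snd H \<and> \<not> (j = 1 \<and> f = es 1)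
          \<and> \<not> (2 \<le> j \<and> f = es j) \<and> \<not> (j < d \<and> f = es (Suc j))"
    using d f ne ne1 by (intro exI[of _ d] exI[of _ "es (Suc d)"]) auto
  hence "glue es d ` es (Suc d) \<in> snd (Hd H es d)"
    unfolding Hd_def snd_conv by blast
  thus ?thesis using eprime_eq[OF g es d] by simp
qed




lemma E_Suc:
  assumes g: "is_graph H" and es: "edge_seq H es" and d: "d \<ge> 1"
  shows "snd (Hd H es (Suc d)) \<subseteq> (snd (Hd H es d) - {Pair d ` es (Suc d)}) \<union> CE H es (Suc d)"
proof
  fix f assume "f \<in> snd (Hd H es (Suc d))"
  then obtain j h where f: "f = glue es j ` h" "1 \<le> j" "j \<le> Suc d" "h \<in> snd H"
    "\<not> (j = 1 \<and> h = es 1)" "\<not> (2 \<le> j \<and> h = es j)" "\<not> (j < Suc d \<and> h = es (Suc j))"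
    unfolding Hd_E by blast
  show "f \<in> (snd (Hd H es d) - {Pair d ` es (Suc d)}) \<union> CE H es (Suc d)"
  proof (cases "j = Suc d")
    case True
    hence "f \<in> CE H es (Suc d)" using f d unfolding CE_def by auto
    thus ?thesis by simp
  next
    case False
    hence jd: "j \<le> d" using f by simp
    have "f \<in> snd (Hd H es d)" unfolding Hd_E using f jd by (intro exI[of _ j] exI[of _ h]) auto
    moreover have "f \<noteq> Pair d ` es (Suc d)"
    proof
      assume a: "f = Pair d ` es (Suc d)"
      show False
      proof (cases "j = d")
        case True
        have "glue es d ` h = f" using f(1) True by simp
        also have "\<dots> = glue es d ` es (Suc d)" using a eprime_eq(1)[OF g es d] by simp
        finally have "glue es d ` h = glue es d ` es (Suc d)" .
        hence "h = es (Suc d)" by (simp add: inj_image_eq_iff[OF glue_inj])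
        thus False using f True by simp
      next
        case False
        hence jl: "j < d" using jd by simp
        have "card h = 2" using g f unfolding is_graph_def by auto
        hence "h \<noteq> {}" by auto
        then obtain x where "x \<in> h" by blast
        hence "glue es j x \<in> f" using f(1) by simp
        hence "glue es j x \<in> Pair d ` es (Suc d)" using a by simp
        hence "fst (glue es j x) = d" by auto
        thus False using glue_fst[of es j x] jl by simp
      qed
    qed
    ultimately show ?thesis by simp
  qed
qed

lemma E_disj:
  assumes g: "is_graph H" and es: "edge_seq H es" and d: "d \<ge> 1"
  shows "snd (Hd H es d) \<inter> CE H es (Suc d) = {}"
proof (rule ccontr)
  assume "snd (Hd H es d) \<inter> CE H es (Suc d) \<noteq> {}"
  then obtain f h where f: "f \<in> snd (Hd H es d)" "f = glue es (Suc d) ` h" "h \<in> snd H" "h \<noteq> es (Suc d)"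
    unfolding CE_def by blast
  have ch: "card h = 2" "finite h" using g f unfolding is_graph_def by (auto intro: card_ge_0_finite)
  have ce: "card (es (Suc d)) = 2" using edge_seq_facts[OF g es, of "Suc d"] by simp
  have "\<not> h \<subseteq> es (Suc d)"
  proof
    assume "h \<subseteq> es (Suc d)"
    moreover have "finite (es (Suc d))" using edge_seq_facts[OF g es, of "Suc d"] by simp
    ultimately have "h = es (Suc d)" using ch ce card_subset_eq by metis
    thus False using f by simp
  qed
  then obtain x where x: "x \<in> h" "x \<notin> es (Suc d)" by auto
  have "glue es (Suc d) x = (Suc d, x)" using x unfolding glue_def by simp
  moreover have "glue es (Suc d) x \<in> fst (Hd H es d)" using Hd_E_sub[OF g] f x by blast
  ultimately have "fst (Suc d, x) \<le> d" using Hd_V_fst by metis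
  thus False by simp
qed

lemma Hd1_V: "fst (Hd H es 1) = glue es 1 ` fst H"
  unfolding Hd_V set_eq_iff by auto

lemma Hd1_E: "snd (Hd H es 1) = CE H es 1"
proof (rule set_eqI, rule iffI)
  fix f assume "f \<in> snd (Hd H es 1)"
  then obtain j h where "f = glue es j ` h" "1 \<le> j" "j \<le> 1" "h \<in> snd H" "\<not> (j = 1 \<and> h = es 1)"
    unfolding Hd_E by blast
  moreover have "j = 1" using \<open>1 \<le> j\<close> \<open>j \<le> 1\<close> by simp
  ultimately have "f = glue es 1 ` h \<and> h \<in> snd H \<and> h \<noteq> es 1" by simp
  thus "f \<in> CE H es 1" unfolding CE_def by blast
next
  fix f assume "f \<in> CE H es 1"
  then obtain h where "f = glue es 1 ` h" "h \<in> snd H" "h \<noteq> es 1" unfolding CE_def by blast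
  thus "f \<in> snd (Hd H es 1)" unfolding Hd_E by (intro exI[of _ 1] exI[of _ h]) simp
qed




lemma pull_V: "VF \<inter> glue es k ` A = glue es k ` {x \<in> A. glue es k x \<in> VF}"
  by blast

lemma pull_V_card: "card (glue es k ` B) = card B"
  by (rule card_image) (meson glue_inj inj_on_subset subset_UNIV)

lemma pull_E: "EF \<inter> CE H es k = (\<lambda>h. glue es k ` h) ` {h \<in> snd H - {es k}. glue es k ` h \<in> EF}"
proof (rule set_eqI, rule iffI)
  fix f assume "f \<in> EF \<inter> CE H es k"
  then obtain h where "f = glue es k ` h" "h \<in> snd H" "h \<noteq> es k" "f \<in> EF" unfolding CE_def by blast
  thus "f \<in> (\<lambda>h. glue es k ` h) ` {h \<in> snd H - {es k}. glue es k ` h \<in> EF}" by blast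
next
  fix f assume "f \<in> (\<lambda>h. glue es k ` h) ` {h \<in> snd H - {es k}. glue es k ` h \<in> EF}"
  then obtain h where "f = glue es k ` h" "h \<in> snd H" "h \<noteq> es k" "f \<in> EF" by blast
  thus "f \<in> EF \<inter> CE H es k" unfolding CE_def by blast
qed

lemma pull_E_card: "card ((\<lambda>h. glue es k ` h) ` B) = card B"
proof (rule card_image)
  show "inj_on (\<lambda>h. glue es k ` h) B"
    unfolding inj_on_def by (simp add: inj_image_eq_iff[OF glue_inj])
qed

lemma pull_sub:
  assumes "\<forall>f\<in>EF. f \<subseteq> VF" "is_graph H"
  shows "\<forall>h\<in>{h \<in> snd H - {es k}. glue es k ` h \<in> EF}. h \<subseteq> {x \<in> fst H. glue es k x \<in> VF}"
proof (intro ballI subsetI)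
  fix h x assume h: "h \<in> {h \<in> snd H - {es k}. glue es k ` h \<in> EF}" and x: "x \<in> h"
  have "h \<subseteq> fst H" using h assms(2) unfolding is_graph_def by auto
  moreover have "glue es k ` h \<subseteq> VF" using h assms(1) by auto
  ultimately show "x \<in> {x \<in> fst H. glue es k x \<in> VF}" using x by auto
qed

lemma fin_F:
  assumes "subgraph F G" "finite (fst G)"
  shows "finite (fst F)" "finite (snd F)"
proof -
  show f: "finite (fst F)" using assms unfolding subgraph_def by (meson finite_subset)
  have "snd F \<subseteq> Pow (fst F)" using assms unfolding subgraph_def by auto
  thus "finite (snd F)" using f by (meson finite_Pow_iff finite_subset)
qed




lemma base_case:
  assumes bal: "balanced H" and es: "edge_seq H es"
    and sub: "subgraph F (Hd H es 1)" and rt: "root es \<subseteq> fst F"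
  shows "(real (nv F) - 2) * lam H - real (ne F) \<ge> -1 \<and>
         (F \<noteq> Hd H es 1 \<longrightarrow> (real (nv F) - 2) * lam H - real (ne F) \<ge> 0)"
proof -
  have g: "is_graph H" using bal unfolding balanced_def by auto
  have finH: "finite (fst H)" using g unfolding is_graph_def by auto
  define VP where "VP = {x \<in> fst H. glue es 1 x \<in> fst F}"
  define EP where "EP = {h \<in> snd H - {es 1}. glue es 1 ` h \<in> snd F}"
  have VF: "fst F = glue es 1 ` VP"
  proof -
    have "fst F \<subseteq> glue es 1 ` fst H" using sub Hd1_V unfolding subgraph_def by metis
    hence "fst F = fst F \<inter> glue es 1 ` fst H" by blast
    thus ?thesis unfolding VP_def using pull_V by metis
  qed
  have EF: "snd F = (\<lambda>h. glue es 1 ` h) ` EP"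
  proof -
    have "snd F \<subseteq> CE H es 1" using sub Hd1_E unfolding subgraph_def by metis
    hence "snd F = snd F \<inter> CE H es 1" by blast
    thus ?thesis unfolding EP_def using pull_E by metis
  qed
  have cV: "nv F = card VP" unfolding nv_def VF pull_V_card ..
  have cE: "ne F = card EP" unfolding ne_def EF pull_E_card ..
  have e1: "es 1 \<in> snd H" "card (es 1) = 2" "es 1 \<subseteq> fst H"
    using edge_seq_facts[OF g es, of 1] by auto
  have g1: "\<And>x. glue es 1 x = (1, x)" unfolding glue_def by simp
  have "es 1 \<subseteq> VP"
  proof
    fix x assume "x \<in> es 1"
    hence "(1, x) \<in> fst F" using rt unfolding root_def by auto
    thus "x \<in> VP" unfolding VP_def g1 using e1 \<open>x \<in> es 1\<close> by auto
  qed
  hence s: "card (VP \<inter> es 1) = 2" using e1 by (simp add: Int_absorb1)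
  have VPs: "VP \<subseteq> fst H" unfolding VP_def by auto
  have EPs: "EP \<subseteq> snd H - {es 1}" unfolding EP_def by auto
  have subs: "\<forall>f\<in>EP. f \<subseteq> VP"
    using pull_sub[of "snd F" "fst F" H es 1] sub g unfolding subgraph_def EP_def VP_def by blast
  note cb = copy_bound[OF bal e1(1) VPs EPs subs]
  have A: "(real (nv F) - 2) * lam H - real (ne F) \<ge> -1" using cb(1) s cV cE by simp
  have B: "(real (nv F) - 2) * lam H - real (ne F) \<ge> 0" if ne: "F \<noteq> Hd H es 1"
  proof -
    have "\<not> (VP = fst H \<and> EP = snd H - {es 1})"
    proof
      assume a: "VP = fst H \<and> EP = snd H - {es 1}"
      have "fst F = fst (Hd H es 1)" using a VF Hd1_V by metis
      moreover have "snd F = snd (Hd H es 1)"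
      proof -
        have "snd F = (\<lambda>h. glue es 1 ` h) ` (snd H - {es 1})" using a EF by simp
        also have "\<dots> = CE H es 1" unfolding CE_def by blast
        finally show ?thesis using Hd1_E by metis
      qed
      ultimately show False using ne by (simp add: prod_eq_iff)
    qed
    thus ?thesis using cb(2) s cV cE by simp
  qed
  show ?thesis using A B by blast
qed

lemma step_case:
  assumes bal: "balanced H" and es: "edge_seq H es" and d: "d \<ge> 1"
    and IH: "\<And>G. subgraph G (Hd H es d) \<Longrightarrow> root es \<subseteq> fst G \<Longrightarrow>
       (real (nv G) - 2) * lam H - real (ne G) \<ge> -1 \<and>
       (G \<noteq> Hd H es d \<longrightarrow> (real (nv G) - 2) * lam H - real (ne G) \<ge> 0)"
    and sub: "subgraph F (Hd H es (Suc d))" and rt: "root es \<subseteq> fst F"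
  shows "(real (nv F) - 2) * lam H - real (ne F) \<ge> -1 \<and>
         (F \<noteq> Hd H es (Suc d) \<longrightarrow> (real (nv F) - 2) * lam H - real (ne F) \<ge> 0)"
proof -
  have g: "is_graph H" using bal unfolding balanced_def by auto
  have finH: "finite (fst H)" using g unfolding is_graph_def by auto
  have lam: "lam H \<ge> 2" using lam_ge2[OF bal] .
  define W where "W = fst (Hd H es d)"
  define X where "X = glue es (Suc d) ` fst H"
  define e' where "e' = Pair d ` es (Suc d)"
  define G where "G = (fst F \<inter> W, snd F \<inter> snd (Hd H es d))"
  define VP where "VP = {x \<in> fst H. glue es (Suc d) x \<in> fst F}"
  define EP where "EP = {h \<in> snd H - {es (Suc d)}. glue es (Suc d) ` h \<in> snd F}"
  have es1: "es (Suc d) \<in> snd H" "card (es (Suc d)) = 2" "es (Suc d) \<subseteq> fst H" "finite (es (Suc d))"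
    using edge_seq_facts[OF g es, of "Suc d"] by auto
  have finW: "finite W" unfolding W_def using Hd_V_finite[OF finH] .
  have finS: "finite (fst (Hd H es (Suc d)))" using Hd_V_finite[OF finH] .
  have finF: "finite (fst F)" "finite (snd F)" using fin_F[OF sub finS] by auto
  have VFsub: "fst F \<subseteq> W \<union> X" using sub Hd_V_Suc unfolding subgraph_def W_def X_def by metis
  have WX: "W \<inter> X = e'" unfolding W_def X_def e'_def using shared_V[OF g es d] .
  have e'g: "e' = glue es (Suc d) ` es (Suc d)" unfolding e'_def using eprime_eq(2)[OF g es d] by simp
  have FX: "fst F \<inter> X = glue es (Suc d) ` VP" unfolding X_def VP_def by (rule pull_V)
  have Fe': "fst F \<inter> e' = glue es (Suc d) ` (VP \<inter> es (Suc d))"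
    unfolding e'g VP_def using es1(3) by blast
  have cardV: "card (fst F) + card (VP \<inter> es (Suc d)) = card (fst F \<inter> W) + card VP"
  proof -
    have u: "(fst F \<inter> W) \<union> (fst F \<inter> X) = fst F" using VFsub by blast
    have i: "(fst F \<inter> W) \<inter> (fst F \<inter> X) = fst F \<inter> e'" using WX by blast
    have "card (fst F \<inter> W) + card (fst F \<inter> X) = card (fst F) + card (fst F \<inter> e')"
      using card_Un_Int[of "fst F \<inter> W" "fst F \<inter> X"] finF u i by simp
    thus ?thesis using FX Fe' pull_V_card by metis
  qed
  have EFsub: "snd F \<subseteq> (snd (Hd H es d) - {e'}) \<union> CE H es (Suc d)"
    using sub E_Suc[OF g es d] unfolding subgraph_def e'_def by blast
  have disj: "snd (Hd H es d) \<inter> CE H es (Suc d) = {}" using E_disj[OF g es d] .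
  have e'in: "e' \<in> snd (Hd H es d)" unfolding e'_def using eprime_in[OF g es d] .
  have e'notF: "e' \<notin> snd F"
  proof
    assume "e' \<in> snd F"
    hence "e' \<in> CE H es (Suc d)" using EFsub by blast
    thus False using disj e'in by blast
  qed
  have FCE: "snd F \<inter> CE H es (Suc d) = (\<lambda>h. glue es (Suc d) ` h) ` EP" unfolding EP_def by (rule pull_E)
  have cardE: "card (snd F) = card (snd G) + card EP"
  proof -
    have sG: "snd G = snd F \<inter> snd (Hd H es d)" unfolding G_def by simp
    have u: "snd G \<union> (snd F \<inter> CE H es (Suc d)) = snd F" unfolding sG using EFsub by blast
    have i: "snd G \<inter> (snd F \<inter> CE H es (Suc d)) = {}" unfolding sG using disj by blast
    have f1: "finite (snd G)" unfolding sG using finF by simp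
    have f2: "finite (snd F \<inter> CE H es (Suc d))" using finF by simp
    have "card (snd G \<union> (snd F \<inter> CE H es (Suc d))) = card (snd G) + card (snd F \<inter> CE H es (Suc d))"
      by (rule card_Un_disjoint[OF f1 f2 i])
    hence "card (snd F) = card (snd G) + card (snd F \<inter> CE H es (Suc d))" unfolding u .
    thus ?thesis using FCE pull_E_card by metis
  qed
  have subG: "subgraph G (Hd H es d)"
  proof -
    have "\<forall>f\<in>snd G. f \<subseteq> fst G"
    proof
      fix f assume "f \<in> snd G"
      hence "f \<subseteq> fst F" "f \<subseteq> W" using sub Hd_E_sub[OF g, of es d] unfolding G_def subgraph_def W_def by auto
      thus "f \<subseteq> fst G" unfolding G_def by auto
    qed
    thus ?thesis unfolding subgraph_def G_def W_def by auto
  qed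
  have rootW: "root es \<subseteq> W"
  proof
    fix p assume "p \<in> root es"
    then obtain x where x: "x \<in> es 1" "p = (1, x)" unfolding root_def by auto
    have "x \<in> fst H" using edge_seq_facts(2)[OF g es, of 1] x by auto
    moreover have "p = glue es 1 x" using x unfolding glue_def by simp
    ultimately show "p \<in> W" unfolding W_def Hd_V using d by blast
  qed
  have rtG: "root es \<subseteq> fst G" using rt rootW unfolding G_def by auto
  have e'notG: "e' \<notin> snd G" using e'notF unfolding G_def by auto
  have VPs: "VP \<subseteq> fst H" unfolding VP_def by auto
  have EPs: "EP \<subseteq> snd H - {es (Suc d)}" unfolding EP_def by auto
  have subs: "\<forall>f\<in>EP. f \<subseteq> VP"
    using pull_sub[of "snd F" "fst F" H es "Suc d"] sub g unfolding subgraph_def EP_def VP_def by blast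
  note cb = copy_bound[OF bal es1(1) VPs EPs subs]
  define c where "c = (real (card VP) - real (card (VP \<inter> es (Suc d)))) * lam H - real (card EP)"
  define DG where "DG = (real (nv G) - 2) * lam H - real (ne G)"
  have DF: "(real (nv F) - 2) * lam H - real (ne F) = DG + c"
  proof -
    have "real (nv F) = real (nv G) + real (card VP) - real (card (VP \<inter> es (Suc d)))"
      using cardV unfolding nv_def G_def by simp
    moreover have "real (ne F) = real (ne G) + real (card EP)" using cardE unfolding ne_def by simp
    ultimately have "(real (nv F) - 2) * lam H - real (ne F) = (real (nv G) + real (card VP) - real (card (VP \<inter> es (Suc d))) - 2) * lam H - (real (ne G) + real (card EP))"
      by simp
    also have "\<dots> = DG + c" unfolding DG_def c_def by (simp add: algebra_simps)
    finally show ?thesis .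
  qed
  show ?thesis
  proof (cases "es (Suc d) \<subseteq> VP")
    case True
    define G' where "G' = (fst G, insert e' (snd G))"
    have e'sub: "e' \<subseteq> fst G"
    proof -
      have "e' \<subseteq> fst F" using True unfolding e'g VP_def by auto
      moreover have "e' \<subseteq> W" using WX by blast
      ultimately show ?thesis unfolding G_def by auto
    qed
    have subG': "subgraph G' (Hd H es d)" using subG e'in e'sub unfolding subgraph_def G'_def by auto
    have finG: "finite (snd G)" unfolding G_def using finF by simp
    have "nv G' = nv G" "ne G' = ne G + 1" unfolding G'_def nv_def ne_def using finG e'notG by auto
    hence DG': "DG = (real (nv G') - 2) * lam H - real (ne G') + 1" unfolding DG_def by simp
    note ih = IH[OF subG'] rtG
    have ih1: "(real (nv G') - 2) * lam H - real (ne G') \<ge> -1" using IH[OF subG'] rtG unfolding G'_def by auto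
    have ih2: "G' \<noteq> Hd H es d \<Longrightarrow> (real (nv G') - 2) * lam H - real (ne G') \<ge> 0"
      using IH[OF subG'] rtG unfolding G'_def by auto
    have c1: "c \<ge> -1" using cb(1) unfolding c_def .
    have A: "(real (nv F) - 2) * lam H - real (ne F) \<ge> -1" using DF DG' ih1 c1 by linarith
    have B: "(real (nv F) - 2) * lam H - real (ne F) \<ge> 0" if neF: "F \<noteq> Hd H es (Suc d)"
    proof (cases "G' = Hd H es d")
      case False thus ?thesis using DF DG' ih2 c1 by linarith
    next
      case Gfull: True
      have "\<not> (VP = fst H \<and> EP = snd H - {es (Suc d)})"
      proof
        assume full: "VP = fst H \<and> EP = snd H - {es (Suc d)}"
        have V1: "W \<subseteq> fst F" using Gfull unfolding G'_def G_def W_def by (metis fst_conv inf.cobounded1 le_inf_iff subset_refl)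
        have V2: "X \<subseteq> fst F" using full unfolding X_def VP_def by auto
        have "fst (Hd H es (Suc d)) \<subseteq> fst F" using V1 V2 Hd_V_Suc[of H es d] unfolding W_def X_def by simp
        hence Veq: "fst F = fst (Hd H es (Suc d))" using sub unfolding subgraph_def by blast
        have E1: "snd (Hd H es d) - {e'} \<subseteq> snd F"
          using Gfull unfolding G'_def G_def by (metis Diff_subset_conv Un_commute insert_is_Un le_infE snd_conv subset_refl)
        have E2: "CE H es (Suc d) \<subseteq> snd F"
        proof
          fix f assume "f \<in> CE H es (Suc d)"
          then obtain h where h: "f = glue es (Suc d) ` h" "h \<in> snd H" "h \<noteq> es (Suc d)" unfolding CE_def by blast
          hence "h \<in> EP" using full by auto
          thus "f \<in> snd F" using h unfolding EP_def by auto
        qed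
        have "snd (Hd H es (Suc d)) \<subseteq> snd F" using E_Suc[OF g es d] E1 E2 unfolding e'_def by blast
        hence "snd F = snd (Hd H es (Suc d))" using sub unfolding subgraph_def by blast
        thus False using Veq neF by (simp add: prod_eq_iff)
      qed
      hence "c \<ge> 0" using cb(2) unfolding c_def by blast
      moreover have "(real (nv G') - 2) * lam H - real (ne G') \<ge> -1" using ih1 .
      ultimately show ?thesis using DF DG' by linarith
    qed
    show ?thesis using A B by blast
  next
    case False
    have "\<not> (VP = fst H \<and> EP = snd H - {es (Suc d)})" using False es1(3) by blast
    hence c0: "c \<ge> 0" using cb(2) unfolding c_def by blast
    have "G \<noteq> Hd H es d" using e'in e'notG by auto
    hence "DG \<ge> 0" using IH[OF subG rtG] unfolding DG_def by blast
    thus ?thesis using DF c0 by linarith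
  qed
qed

lemma main_ind:
  assumes bal: "balanced H" and es: "edge_seq H es" and d: "d \<ge> 1"
  shows "\<And>F. subgraph F (Hd H es d) \<Longrightarrow> root es \<subseteq> fst F \<Longrightarrow>
       (real (nv F) - 2) * lam H - real (ne F) \<ge> -1 \<and>
       (F \<noteq> Hd H es d \<longrightarrow> (real (nv F) - 2) * lam H - real (ne F) \<ge> 0)"
  using d
proof (induction d rule: nat_induct_at_least)
  case base
  then show ?case using base_case[OF bal es] by blast
next
  case (Suc n)
  then show ?case using step_case[OF bal es Suc.hyps(1) Suc.IH] by blast
qed

theorem lemma2p5:
  fixes H :: "'a graph" and es :: "nat \<Rightarrow> 'a set" and d :: nat
    and F :: "(nat \<times> 'a) graph"
  assumes "balanced H" and "edge_seq H es" and "d \<ge> 1"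
    and "subgraph F (Hd H es d)" and "F \<noteq> Hd H es d"
    and "root es \<subseteq> fst F"
  shows "real (ne F) \<le> (real (nv F) - 2) * lam H"
  using main_ind[OF assms(1,2,3,4,6)] assms(5) by linarith


end
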